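(* Let $v=[q;w_1,\ldots,w_n]$ be a WVG, $i$ a player, and $S\subseteq N\setminus\{i\}$ a coalition. Then $\phi_i(v)\le\phi_{\&(\{i\}\cup S)}(v_{\&(\{i\}\cup S)})\le 1$; that is, annexation never decreases a player's Shapley–Shubik index.
   Context: A weighted voting game (WVG) $v=[q;w_1,\ldots,w_n]$ has player set $N=\{1,\ldots,n\}$, nonnegative weights $w_j$ and quota $q$ with $0<q\le \sum_j w_j$; $v(X)=1$ if $\sum_{j\in X}w_j\ge q$ and $0$ otherwise. The Shapley–Shubik index of player $j$ in a game with player set $M$, $|M|=m$, is $\phi_j=\frac{1}{m!}\sum_{X\subseteq M,\,j\in X}(|X|-1)!\,(m-|X|)!\,(v(X)-v(X\setminus\{j\}))$. For $T\subseteq N$, the merged game $v_{\&T}$ is the WVG with the same quota on player set $(N\setminus T)\cup\{\&T\}$, where players outside $T$ keep their weights and $\&T$ has weight $\sum_{j\in T}w_j$. *)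

theory Defs
  imports Complex_Main
begin

definition wvg :: "real \<Rightarrow> ('a \<Rightarrow> real) \<Rightarrow> 'a set \<Rightarrow> real" where
  "wvg q w X = (if sum w X \<ge> q then 1 else 0)"

definition shapley :: "'a set \<Rightarrow> ('a set \<Rightarrow> real) \<Rightarrow> 'a \<Rightarrow> real" where
  "shapley M v j = (1 / fact (card M)) *
     (\<Sum>X\<in>{X. X \<subseteq> M \<and> j \<in> X}.
        fact (card X - 1) * fact (card M - card X) * (v X - v (X - {j})))"

text \<open>Merged game: players outside T are represented by Some j (keeping weight w j),
  the merged player &T is represented by None with weight the total weight of T.\<close>
definition merged_players :: "'a set \<Rightarrow> 'a set \<Rightarrow> 'a option set" where
  "merged_players N T = Some ` (N - T) \<union> {None}"

definition merged_weight :: "('a \<Rightarrow> real) \<Rightarrow> 'a set \<Rightarrow> 'a option \<Rightarrow> real" where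
  "merged_weight w T p = (case p of None \<Rightarrow> sum w T | Some j \<Rightarrow> w j)"

end

theory Submission
  imports Defs
begin

definition cc :: "nat \<Rightarrow> nat \<Rightarrow> real" where
  "cc n k = fact k * fact (n - k - 1) / fact n"

lemma cc_nonneg: "cc n k \<ge> 0"
  unfolding cc_def by simp

lemma cc_rec:
  assumes "k < n"
  shows "cc n k = cc (Suc n) k + cc (Suc n) (Suc k)"
proof -
  obtain d where n: "n = k + 1 + d" using assms by (metis add.commute less_imp_Suc_add plus_1_eq_Suc add_Suc_right)
  have e1: "n - k - 1 = d" "Suc n - k - 1 = Suc d" "Suc n - Suc k - 1 = d" using n by auto
  have "cc (Suc n) k + cc (Suc n) (Suc k)
        = fact k * (fact (Suc d)) / fact (Suc n) + fact (Suc k) * fact d / fact (Suc n)"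
    unfolding cc_def e1 by simp
  also have "\<dots> = fact k * fact d * (real (Suc d) + real (Suc k)) / fact (Suc n)"
    by (simp add: fact_Suc algebra_simps add_divide_distrib)
  also have "\<dots> = fact k * fact d * real (Suc n) / (real (Suc n) * fact n)"
    using n by (simp add: fact_Suc algebra_simps)
  also have "\<dots> = cc n k" unfolding cc_def e1 by simp
  finally show ?thesis by simp
qed

lemma inj_insert_Pow: "a \<notin> S \<Longrightarrow> inj_on (insert a) (Pow S)"
  unfolding inj_on_def by (metis PowD insert_ident subsetD)

lemma sumZ:
  assumes "finite S"
  shows "\<forall>y m. y < m \<longrightarrow> (\<Sum>Z\<in>Pow S. cc (m + card S) (y + card Z)) = cc m y"
  using assms
proof (induction S rule: finite_induct)
  case empty
  then show ?case by simp
next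
  case (insert a S)
  show ?case
  proof (intro allI impI)
    fix y m :: nat assume ym: "y < m"
    have disj: "Pow S \<inter> insert a ` Pow S = {}" using insert.hyps by auto
    have fin: "finite (Pow S)" using insert.hyps by simp
    have h1: "(\<Sum>Z\<in>Pow (insert a S). cc (m + card (insert a S)) (y + card Z))
        = (\<Sum>Z\<in>Pow S. cc (Suc (m + card S)) (y + card Z))
          + (\<Sum>Z\<in>insert a ` Pow S. cc (Suc (m + card S)) (y + card Z))"
    proof -
      have c: "m + card (insert a S) = Suc (m + card S)" using insert.hyps by simp
      have fin2: "finite (insert a ` Pow S)" using fin by blast
      show ?thesis unfolding c Pow_insert
        by (rule sum.union_disjoint[OF fin fin2 disj])
    qed
    have h2: "(\<Sum>Z\<in>insert a ` Pow S. cc (Suc (m + card S)) (y + card Z))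
        = (\<Sum>Z\<in>Pow S. cc (Suc (m + card S)) (Suc (y + card Z)))"
    proof -
      have "(\<Sum>Z\<in>insert a ` Pow S. cc (Suc (m + card S)) (y + card Z))
          = (\<Sum>Z\<in>Pow S. cc (Suc (m + card S)) (y + card (insert a Z)))"
        using sum.reindex[OF inj_insert_Pow[OF insert.hyps(2)], of "\<lambda>Z. cc (Suc (m + card S)) (y + card Z)"]
        by (simp only: o_def)
      also have "\<dots> = (\<Sum>Z\<in>Pow S. cc (Suc (m + card S)) (Suc (y + card Z)))"
      proof (rule sum.cong)
        fix Z assume "Z \<in> Pow S"
        then have "finite Z" "a \<notin> Z" using insert.hyps(1,2) by (auto intro: finite_subset)
        then show "cc (Suc (m + card S)) (y + card (insert a Z)) = cc (Suc (m + card S)) (Suc (y + card Z))"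
          by simp
      qed simp
      finally show ?thesis .
    qed
    have h3: "(\<Sum>Z\<in>Pow S. cc (Suc (m + card S)) (y + card Z))
          + (\<Sum>Z\<in>Pow S. cc (Suc (m + card S)) (Suc (y + card Z)))
        = (\<Sum>Z\<in>Pow S. cc (m + card S) (y + card Z))"
      unfolding sum.distrib[symmetric]
    proof (rule sum.cong)
      fix Z assume "Z \<in> Pow S"
      then have "card Z \<le> card S" using insert.hyps(1) by (intro card_mono) auto
      then have "y + card Z < m + card S" using ym by simp
      then show "cc (Suc (m + card S)) (y + card Z) + cc (Suc (m + card S)) (Suc (y + card Z)) = cc (m + card S) (y + card Z)"
        by (rule cc_rec[symmetric])
    qed simp
    have h4: "(\<Sum>Z\<in>Pow S. cc (m + card S) (y + card Z)) = cc m y" using insert.IH ym by blast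
    show "(\<Sum>Z\<in>Pow (insert a S). cc (m + card (insert a S)) (y + card Z)) = cc m y"
      using h1 h2 h3 h4 by simp
  qed
qed

lemma shapley_alt:
  assumes "finite M" "j \<in> M"
  shows "shapley M v j = (\<Sum>X\<in>Pow (M - {j}). cc (card M) (card X) * (v (insert j X) - v X))"
proof -
  have im: "{X. X \<subseteq> M \<and> j \<in> X} = insert j ` Pow (M - {j})"
  proof
    show "{X. X \<subseteq> M \<and> j \<in> X} \<subseteq> insert j ` Pow (M - {j})"
    proof
      fix X assume X: "X \<in> {X. X \<subseteq> M \<and> j \<in> X}"
      then have "X = insert j (X - {j})" "X - {j} \<in> Pow (M - {j})" by auto
      then show "X \<in> insert j ` Pow (M - {j})" by (rule image_eqI)
    qed
  qed (use assms in auto)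
  have inj: "inj_on (insert j) (Pow (M - {j}))" by (rule inj_insert_Pow) simp
  have "shapley M v j = (1 / fact (card M)) * (\<Sum>X\<in>Pow (M - {j}).
        fact (card (insert j X) - 1) * fact (card M - card (insert j X)) * (v (insert j X) - v (insert j X - {j})))"
    unfolding shapley_def im by (simp add: sum.reindex[OF inj])
  also have "\<dots> = (\<Sum>X\<in>Pow (M - {j}). cc (card M) (card X) * (v (insert j X) - v X))"
    unfolding sum_distrib_left
  proof (rule sum.cong)
    fix X assume X: "X \<in> Pow (M - {j})"
    then have "finite X" "j \<notin> X" using assms(1) by (auto intro: finite_subset)
    moreover have "insert j X - {j} = X" using X by auto
    ultimately show "1 / fact (card M) * (fact (card (insert j X) - 1) * fact (card M - card (insert j X)) * (v (insert j X) - v (insert j X - {j})))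
      = cc (card M) (card X) * (v (insert j X) - v X)"
      unfolding cc_def by simp
  qed simp
  finally show ?thesis .
qed

lemma sum_Pow_Un:
  assumes "finite A" "finite B" "A \<inter> B = {}"
  shows "(\<Sum>X\<in>Pow (A \<union> B). h X) = (\<Sum>Y\<in>Pow A. \<Sum>Z\<in>Pow B. h (Y \<union> Z))"
proof -
  have inj: "inj_on (\<lambda>(Y,Z). Y \<union> Z) (Pow A \<times> Pow B)"
  proof (rule inj_onI)
    fix p p' assume hp: "p \<in> Pow A \<times> Pow B" "p' \<in> Pow A \<times> Pow B"
      and ep: "(\<lambda>(Y,Z). Y \<union> Z) p = (\<lambda>(Y,Z). Y \<union> Z) p'"
    obtain Y1 Z1 where p: "p = (Y1, Z1)" by (cases p)
    obtain Y2 Z2 where p': "p' = (Y2, Z2)" by (cases p')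
    have h: "Y1 \<subseteq> A" "Z1 \<subseteq> B" "Y2 \<subseteq> A" "Z2 \<subseteq> B" using hp p p' by auto
    have e: "Y1 \<union> Z1 = Y2 \<union> Z2" using ep p p' by simp
    have "Y1 = (Y1 \<union> Z1) \<inter> A" "Z1 = (Y1 \<union> Z1) \<inter> B"
         "Y2 = (Y2 \<union> Z2) \<inter> A" "Z2 = (Y2 \<union> Z2) \<inter> B" using h assms(3) by auto
    then show "p = p'" using e p p' by metis
  qed
  have im: "(\<lambda>(Y,Z). Y \<union> Z) ` (Pow A \<times> Pow B) = Pow (A \<union> B)"
  proof
    show "Pow (A \<union> B) \<subseteq> (\<lambda>(Y,Z). Y \<union> Z) ` (Pow A \<times> Pow B)"
    proof
      fix X assume "X \<in> Pow (A \<union> B)"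
      then have "X = (X \<inter> A) \<union> (X \<inter> B)" "(X \<inter> A, X \<inter> B) \<in> Pow A \<times> Pow B" by auto
      then show "X \<in> (\<lambda>(Y,Z). Y \<union> Z) ` (Pow A \<times> Pow B)"
        by (metis (no_types, lifting) case_prod_conv image_eqI)
    qed
  qed blast
  have "(\<Sum>X\<in>Pow (A \<union> B). h X) = (\<Sum>p\<in>Pow A \<times> Pow B. h ((\<lambda>(Y,Z). Y \<union> Z) p))"
    unfolding im[symmetric] by (simp add: sum.reindex[OF inj] del: Pow_iff)
  also have "\<dots> = (\<Sum>Y\<in>Pow A. \<Sum>Z\<in>Pow B. h (Y \<union> Z))"
    by (simp add: sum.cartesian_product split_def)
  finally show ?thesis .
qed

theorem mainTheorem15:
  fixes n :: nat and q :: real and w :: "nat \<Rightarrow> real" and i :: nat and S :: "nat set"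
  assumes "\<forall>j\<in>{1..n}. w j \<ge> 0"
    and "0 < q" and "q \<le> sum w {1..n}"
    and "i \<in> {1..n}"
    and "S \<subseteq> {1..n} - {i}"
  shows "shapley {1..n} (wvg q w) i
           \<le> shapley (merged_players {1..n} (insert i S))
                     (wvg q (merged_weight w (insert i S))) None
       \<and> shapley (merged_players {1..n} (insert i S))
                 (wvg q (merged_weight w (insert i S))) None \<le> 1"
proof -
  define N where "N = {1..n}"
  define T where "T = insert i S"
  define A where "A = N - T"
  define M where "M = merged_players N T"
  define g where "g = wvg q w"
  define g' where "g' = wvg q (merged_weight w T)"
  define m where "m = card A + 1"
  have finN: "finite N" unfolding N_def by simp
  have iN: "i \<in> N" using assms N_def by simp
  have SN: "S \<subseteq> N - {i}" using assms N_def by simp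
  have finS: "finite S" "finite A" "finite T" using SN finN unfolding A_def T_def by (auto intro: finite_subset)
  have TN: "T \<subseteq> N" using iN SN T_def by auto
  have iS: "i \<notin> S" using SN by auto
  have cardN: "card N = m + card S"
  proof -
    have "N = A \<union> T" "A \<inter> T = {}" using TN A_def by auto
    then have "card N = card A + card T" using finS by (simp add: card_Un_disjoint)
    then show ?thesis using iS finS T_def m_def by simp
  qed
  have Mdef: "M = Some ` A \<union> {None}" unfolding M_def merged_players_def A_def by simp
  have finM: "finite M" "None \<in> M" using Mdef finS by auto
  have MN: "M - {None} = Some ` A" using Mdef by auto
  have cardM: "card M = m" using Mdef finS by (simp add: m_def card_image)
  have PowM: "Pow (Some ` A) = image Some ` Pow A"
  proof
    show "Pow (Some ` A) \<subseteq> image Some ` Pow A"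
    proof
      fix X assume "X \<in> Pow (Some ` A)"
      then obtain AA where "AA \<subseteq> A" "X = Some ` AA" by (auto simp: subset_image_iff)
      then show "X \<in> image Some ` Pow A" by blast
    qed
  qed blast
  have injS: "inj_on (image Some) (Pow A)" by (simp add: inj_on_def inj_image_eq_iff)
  have mono: "\<And>X Y. X \<subseteq> Y \<Longrightarrow> Y \<subseteq> N \<Longrightarrow> g X \<le> g Y"
  proof -
    fix X Y assume "X \<subseteq> Y" "Y \<subseteq> N"
    then have "sum w X \<le> sum w Y"
      using assms(1) finN unfolding N_def by (intro sum_mono2) (auto intro: finite_subset)
    then show "g X \<le> g Y" unfolding g_def wvg_def by auto
  qed
  have phiM: "shapley M g' None = (\<Sum>Y\<in>Pow A. cc m (card Y) * (g (Y \<union> T) - g Y))"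
  proof -
    have "shapley M g' None = (\<Sum>X\<in>Pow (Some ` A). cc m (card X) * (g' (insert None X) - g' X))"
      using shapley_alt[OF finM] MN cardM by simp
    also have "\<dots> = (\<Sum>Y\<in>Pow A. cc m (card (Some ` Y)) * (g' (insert None (Some ` Y)) - g' (Some ` Y)))"
      unfolding PowM by (simp add: sum.reindex[OF injS])
    also have "\<dots> = (\<Sum>Y\<in>Pow A. cc m (card Y) * (g (Y \<union> T) - g Y))"
    proof (rule sum.cong)
      fix Y assume Y: "Y \<in> Pow A"
      then have finY: "finite Y" using finS(2) by (auto intro: finite_subset)
      have s1: "sum (merged_weight w T) (Some ` Y) = sum w Y"
        by (simp add: sum.reindex merged_weight_def)
      have "None \<notin> Some ` Y" by auto
      then have s2: "sum (merged_weight w T) (insert None (Some ` Y)) = sum w T + sum w Y"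
        using finY s1 by (simp add: merged_weight_def)
      have "Y \<inter> T = {}" using Y A_def by auto
      then have s3: "sum w (Y \<union> T) = sum w T + sum w Y" using finY finS by (simp add: sum.union_disjoint)
      show "cc m (card (Some ` Y)) * (g' (insert None (Some ` Y)) - g' (Some ` Y)) = cc m (card Y) * (g (Y \<union> T) - g Y)"
        unfolding g_def g'_def wvg_def s1 s2 s3 by (simp add: card_image)
    qed simp
    finally show ?thesis .
  qed
  have part1: "shapley N g i \<le> shapley M g' None"
  proof -
    have NA: "N - {i} = A \<union> S" "A \<inter> S = {}" using A_def T_def SN iN by auto
    have "shapley N g i = (\<Sum>X\<in>Pow (A \<union> S). cc (card N) (card X) * (g (insert i X) - g X))"
      using shapley_alt[OF finN iN] NA by simp
    also have "\<dots> = (\<Sum>Y\<in>Pow A. \<Sum>Z\<in>Pow S. cc (card N) (card (Y \<union> Z)) * (g (insert i (Y \<union> Z)) - g (Y \<union> Z)))"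
      by (rule sum_Pow_Un) (use finS NA in auto)
    also have "\<dots> \<le> (\<Sum>Y\<in>Pow A. \<Sum>Z\<in>Pow S. cc (m + card S) (card Y + card Z) * (g (Y \<union> T) - g Y))"
    proof (intro sum_mono)
      fix Y Z assume Y: "Y \<in> Pow A" and Z: "Z \<in> Pow S"
      have "Y \<inter> Z = {}" "finite Y" "finite Z" using Y Z NA finS by (auto intro: finite_subset)
      then have cY: "card (Y \<union> Z) = card Y + card Z" by (simp add: card_Un_disjoint)
      have "g (insert i (Y \<union> Z)) \<le> g (Y \<union> T)"
        using Y Z A_def T_def TN by (intro mono) auto
      moreover have "g Y \<le> g (Y \<union> Z)" using Y Z A_def SN by (intro mono) auto
      ultimately show "cc (card N) (card (Y \<union> Z)) * (g (insert i (Y \<union> Z)) - g (Y \<union> Z))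
          \<le> cc (m + card S) (card Y + card Z) * (g (Y \<union> T) - g Y)"
        unfolding cY cardN by (intro mult_left_mono) (auto simp: cc_nonneg)
    qed
    also have "\<dots> = (\<Sum>Y\<in>Pow A. cc m (card Y) * (g (Y \<union> T) - g Y))"
    proof (rule sum.cong)
      fix Y assume Y: "Y \<in> Pow A"
      then have "card Y \<le> card A" using finS(2) by (intro card_mono) auto
      then have "card Y < m" using m_def by simp
      then show "(\<Sum>Z\<in>Pow S. cc (m + card S) (card Y + card Z) * (g (Y \<union> T) - g Y)) = cc m (card Y) * (g (Y \<union> T) - g Y)"
        using sumZ[OF finS(1)] by (simp add: sum_distrib_right[symmetric])
    qed simp
    finally show ?thesis using phiM by simp
  qed
  have part2: "shapley M g' None \<le> 1"
  proof -
    have "shapley M g' None = (\<Sum>X\<in>Pow (M - {None}). cc (card M) (card X) * (g' (insert None X) - g' X))"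
      using shapley_alt[OF finM] by simp
    also have "\<dots> \<le> (\<Sum>X\<in>Pow (M - {None}). cc (1 + card (M - {None})) (0 + card X))"
    proof (rule sum_mono)
      fix X assume "X \<in> Pow (M - {None})"
      have "g' (insert None X) - g' X \<le> 1" unfolding g'_def wvg_def by auto
      moreover have "card M = 1 + card (M - {None})" using finM card_Suc_Diff1[of M None] by simp
      ultimately show "cc (card M) (card X) * (g' (insert None X) - g' X) \<le> cc (1 + card (M - {None})) (0 + card X)"
        using cc_nonneg[of "card M" "card X"] by (simp add: mult_left_le)
    qed
    also have "\<dots> = cc 1 0"
    proof -
      have "finite (M - {None})" using finM by simp
      from sumZ[OF this] have "\<forall>y m. y < m \<longrightarrow> (\<Sum>Z\<in>Pow (M - {None}). cc (m + card (M - {None})) (y + card Z)) = cc m y" .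
      then have "(\<Sum>Z\<in>Pow (M - {None}). cc (1 + card (M - {None})) (0 + card Z)) = cc 1 0" by blast
      then show ?thesis .
    qed
    also have "\<dots> = 1" by (simp add: cc_def)
    finally show ?thesis .
  qed
  show ?thesis using part1 part2 unfolding N_def T_def M_def g_def g'_def by simp
qed

end
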